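(* In the sequential contribution game described in the context, let $U$ be an open set of parameter triples $(\gamma,\rho,B)$ with $\gamma>0$, $\rho>0$, $0<B<c_{\max}$, such that for every $(\gamma,\rho,B)\in U$ (with $P$ fixed) the inequalities \[ \rho > n\max_i\ell_i'(c_{\max}),\quad \gamma > \max_{k=2,\dots,n}\frac{\ell_k'(c_{\max})B-\rho/n}{c_{\min}/B},\quad P > \Bigl(\max_i\ell_i'(c_{\max})+\gamma\tfrac{c_{\max}}{B}+\tfrac{\rho}{n}\Bigr)(c_{\max}-c_{\min}) \] hold, so that the game has a unique SPNE outcome $c^*(\gamma,\rho,B)$. Define total equilibrium welfare $W(\gamma,\rho,B)=\sum_{i=1}^n R_i\bigl(c^*(\gamma,\rho,B);\gamma,\rho,B\bigr)$. Then on $U$, $W$ is differentiable and \[ \frac{\partial W}{\partial\gamma}>0,\qquad \frac{\partial W}{\partial\rho}>0,\qquad \frac{\partial W}{\partial B}<0, \] i.e. total welfare is increasing in the cooperation coefficient $\gamma$ and in the sharing rate $\rho$, and decreasing in the threshold $B$.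
   Context: Sequential contribution game (MAC-SPGG). There are $n\ge 2$ agents acting once each in the fixed order $1,2,\dots,n$. Agent $i$ observes the previous contributions $c_1,\dots,c_{i-1}$ (perfect information) and chooses a contribution (score) $c_i\in[c_{\min},c_{\max}]$, where $0<c_{\min}\le c_{\max}<\infty$. A task threshold $B>0$ is given. Convention: $c_0:=0$. Write $S_n=\sum_{j=1}^n c_j$. Each agent $i$ has a cost function $\ell_i:[c_{\min},c_{\max}]\to\mathbb{R}$ that is strictly convex, twice continuously differentiable, with $\ell_i'>0$. Parameters $\rho>0$ (task reward multiplier), $\gamma>0$ (cooperation coefficient), $P>0$ (failure penalty). The payoff of agent $i$ for the profile $c=(c_1,\dots,c_n)$, depending on parameters $(\gamma,\rho,B)$, is \[ R_i(c;\gamma,\rho,B)= -\ell_i(c_i)+\gamma\,\frac{c_{i-1}}{B}\,c_i+\frac{\rho}{n}\,S_n-P\cdot\mathbf{1}(c_n<B). \] SPNE denotes subgame perfect Nash equilibrium of this finite perfect-information game. *)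

theory Defs
  imports "HOL-Analysis.Analysis"
begin

definition strictly_convex_on :: "real set \<Rightarrow> (real \<Rightarrow> real) \<Rightarrow> bool" where
  "strictly_convex_on S f \<longleftrightarrow> convex S \<and>
     (\<forall>x\<in>S. \<forall>y\<in>S. \<forall>u. x \<noteq> y \<and> 0 < u \<and> u < 1 \<longrightarrow>
        f (u * x + (1 - u) * y) < u * f x + (1 - u) * f y)"

text \<open>Agents are indexed 1..n. A (partial) history / profile is a real list; entry
  c ! (i-1) is the contribution c_i of agent i.  A strategy profile assigns to agent i
  a function from histories (lists of length i-1) to contributions.\<close>
type_synonym strategy_profile = "nat \<Rightarrow> real list \<Rightarrow> real"

text \<open>c_{i-1}, with the convention c_0 = 0.\<close>
definition prevc :: "real list \<Rightarrow> nat \<Rightarrow> real" where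
  "prevc c i = (if i \<le> 1 then 0 else c ! (i - 2))"

definition payoff ::
  "nat \<Rightarrow> (nat \<Rightarrow> real \<Rightarrow> real) \<Rightarrow> real \<Rightarrow> real \<Rightarrow> real \<Rightarrow> real \<Rightarrow> nat \<Rightarrow> real list \<Rightarrow> real" where
  "payoff n l P \<gamma> \<rho> B i c =
     - l i (c ! (i - 1)) + \<gamma> * (prevc c i / B) * (c ! (i - 1))
     + \<rho> / real n * sum_list c - P * (if c ! (n - 1) < B then 1 else 0)"

fun play :: "nat \<Rightarrow> strategy_profile \<Rightarrow> real list \<Rightarrow> real list" where
  "play 0 \<sigma> h = h"
| "play (Suc k) \<sigma> h = play k \<sigma> (h @ [\<sigma> (Suc (length h)) h])"

definition outcome_from :: "nat \<Rightarrow> strategy_profile \<Rightarrow> real list \<Rightarrow> real list" where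
  "outcome_from n \<sigma> h = play (n - length h) \<sigma> h"

definition feasible_strategy :: "real \<Rightarrow> real \<Rightarrow> (real list \<Rightarrow> real) \<Rightarrow> bool" where
  "feasible_strategy cmin cmax \<tau> \<longleftrightarrow> (\<forall>h. \<tau> h \<in> {cmin..cmax})"

definition feasible_profile :: "nat \<Rightarrow> real \<Rightarrow> real \<Rightarrow> strategy_profile \<Rightarrow> bool" where
  "feasible_profile n cmin cmax \<sigma> \<longleftrightarrow> (\<forall>i\<in>{1..n}. feasible_strategy cmin cmax (\<sigma> i))"

definition is_SPNE ::
  "nat \<Rightarrow> real \<Rightarrow> real \<Rightarrow> (nat \<Rightarrow> real \<Rightarrow> real) \<Rightarrow> real \<Rightarrow> real \<Rightarrow> real \<Rightarrow> real \<Rightarrow> strategy_profile \<Rightarrow> bool" where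
  "is_SPNE n cmin cmax l P \<gamma> \<rho> B \<sigma> \<longleftrightarrow>
     feasible_profile n cmin cmax \<sigma> \<and>
     (\<forall>h. length h < n \<and> set h \<subseteq> {cmin..cmax} \<longrightarrow>
        (\<forall>j\<in>{length h + 1..n}. \<forall>\<tau>. feasible_strategy cmin cmax \<tau> \<longrightarrow>
           payoff n l P \<gamma> \<rho> B j (outcome_from n (\<sigma>(j := \<tau>)) h)
             \<le> payoff n l P \<gamma> \<rho> B j (outcome_from n \<sigma> h)))"

definition is_SPNE_outcome ::
  "nat \<Rightarrow> real \<Rightarrow> real \<Rightarrow> (nat \<Rightarrow> real \<Rightarrow> real) \<Rightarrow> real \<Rightarrow> real \<Rightarrow> real \<Rightarrow> real \<Rightarrow> real list \<Rightarrow> bool" where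
  "is_SPNE_outcome n cmin cmax l P \<gamma> \<rho> B c \<longleftrightarrow>
     (\<exists>\<sigma>. is_SPNE n cmin cmax l P \<gamma> \<rho> B \<sigma> \<and> c = outcome_from n \<sigma> [])"

definition spne_outcome ::
  "nat \<Rightarrow> real \<Rightarrow> real \<Rightarrow> (nat \<Rightarrow> real \<Rightarrow> real) \<Rightarrow> real \<Rightarrow> real \<Rightarrow> real \<Rightarrow> real \<Rightarrow> real list" where
  "spne_outcome n cmin cmax l P \<gamma> \<rho> B = (THE c. is_SPNE_outcome n cmin cmax l P \<gamma> \<rho> B c)"

definition welfare ::
  "nat \<Rightarrow> real \<Rightarrow> real \<Rightarrow> (nat \<Rightarrow> real \<Rightarrow> real) \<Rightarrow> real \<Rightarrow> real \<Rightarrow> real \<Rightarrow> real \<Rightarrow> real" where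
  "welfare n cmin cmax l P \<gamma> \<rho> B =
     (\<Sum>i = 1..n. payoff n l P \<gamma> \<rho> B i (spne_outcome n cmin cmax l P \<gamma> \<rho> B))"

end

theory Submission
  imports Defs
begin

lemma sc_convex:
  fixes f :: "real \<Rightarrow> real"
  assumes "strictly_convex_on S f" shows "convex_on S f"
proof (rule convex_onI)
  show "convex S" using assms by (simp add: strictly_convex_on_def)
  fix t x y :: real assume t: "t > 0" "t < 1" and xy: "x \<in> S" "y \<in> S"
  show "f ((1 - t) *\<^sub>R x + t *\<^sub>R y) \<le> (1 - t) * f x + t * f y"
  proof (cases "x = y")
    case True then show ?thesis by (simp add: algebra_simps)
  next
    case False
    from assms have H: "\<forall>x\<in>S. \<forall>y\<in>S. \<forall>u. x \<noteq> y \<and> 0 < u \<and> u < 1 \<longrightarrow>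
        f (u * x + (1 - u) * y) < u * f x + (1 - u) * f y" by (simp add: strictly_convex_on_def)
    then have H': "\<And>x y u. x\<in>S \<Longrightarrow> y\<in>S \<Longrightarrow> x \<noteq> y \<Longrightarrow> 0 < u \<Longrightarrow> u < 1 \<Longrightarrow>
        f (u * x + (1 - u) * y) < u * f x + (1 - u) * f y" by blast
    have "f ((1-t) * x + (1 - (1-t)) * y) < (1-t) * f x + (1 - (1-t)) * f y"
      using H'[of x y "1-t"] xy t False by simp
    then show ?thesis by simp
  qed
qed

lemma tangent_end:
  fixes f :: "real \<Rightarrow> real"
  assumes conv: "convex_on {a..b} f" and d: "(f has_real_derivative d) (at b within {a..b})"
    and x: "a \<le> x" "x < b"
  shows "f x - f b \<ge> d * (x - b)"
proof -
  let ?A = "{x<..<b}"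
  have "b \<in> closure (?A - {b})" using x by simp
  then have nb: "at b within ?A \<noteq> bot" by (subst at_within_eq_bot_iff) auto
  have sub: "?A \<subseteq> {a..b}" using x by auto
  from d have "((\<lambda>y. (f y - f b) / (y - b)) \<longlongrightarrow> d) (at b within ?A)"
    unfolding has_field_derivative_iff by (blast intro: tendsto_mono at_le[OF sub])
  moreover have "eventually (\<lambda>y. (f y - f b) / (y - b) \<ge> (f x - f b) / (x - b)) (at b within ?A)"
    unfolding eventually_at_filter
  proof (rule always_eventually, intro allI impI)
    fix y assume y: "y \<in> ?A"
    have cv: "convex_on {x..b} f" using conv by (rule convex_on_subset) (use x in auto)
    have "f y \<le> (f x - f b) / (b - x) * (b - y) + f b"
      using convex_onD_Icc''[OF cv, of y] y by auto
    hence "f y - f b \<le> (f x - f b) * ((b - y) / (b - x))" by simp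
    also have "(b - y) / (b - x) = (y - b) / (x - b)" using y x by (simp add: field_simps)
    finally show "(f y - f b) / (y - b) \<ge> (f x - f b) / (x - b)" using y x
      by (simp add: field_split_simps)
  qed
  ultimately have "d \<ge> (f x - f b) / (x - b)" using nb by (rule tendsto_lowerbound)
  thus ?thesis using x by (simp add: field_simps)
qed

lemma play_upd_late:
  "j \<le> length h \<Longrightarrow> play m (\<sigma>(j := \<tau>)) h = play m \<sigma> h"
  by (induction m arbitrary: h) auto

lemma play_length: "length (play m \<sigma> h) = length h + m"
  by (induction m arbitrary: h) auto

lemma play_const: "play m (\<lambda>i h. c) h = h @ replicate m c"
  by (induction m arbitrary: h) (auto simp: replicate_append_same)

lemma play_const_upd:
  "length h < j \<Longrightarrow> j \<le> length h + m \<Longrightarrow>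
   play m ((\<lambda>i h. c)(j := \<tau>)) h =
     h @ replicate (j - 1 - length h) c @ \<tau> (h @ replicate (j - 1 - length h) c)
       # replicate (length h + m - j) c"
proof (induction m arbitrary: h)
  case 0 then show ?case by simp
next
  case (Suc m)
  show ?case
  proof (cases "j = Suc (length h)")
    case True
    then have "play (Suc m) ((\<lambda>i h. c)(j := \<tau>)) h = play m ((\<lambda>i h. c)(j := \<tau>)) (h @ [\<tau> h])"
      by simp
    also have "\<dots> = play m (\<lambda>i h. c) (h @ [\<tau> h])"
      using True by (intro play_upd_late) simp
    finally show ?thesis using True by (simp add: play_const del: fun_upd_apply)
  next
    case False
    then have j: "length (h @ [c]) < j" "j \<le> length (h @ [c]) + m" using Suc.prems by auto
    have "play (Suc m) ((\<lambda>i h. c)(j := \<tau>)) h = play m ((\<lambda>i h. c)(j := \<tau>)) (h @ [c])"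
      using False by simp
    also have "\<dots> = (h @ [c]) @ replicate (j - 1 - length (h @ [c])) c @
        \<tau> ((h @ [c]) @ replicate (j - 1 - length (h @ [c])) c) # replicate (length (h @ [c]) + m - j) c"
      by (rule Suc.IH[OF j])
    also have "replicate (j - 1 - length h) c = c # replicate (j - 1 - length (h @ [c])) c"
      using j by (simp add: replicate_Suc[symmetric] Suc_diff_Suc)
    ultimately show ?thesis by (simp del: fun_upd_apply play.simps)
  qed
qed


lemma payoff_form:
  assumes j: "1 \<le> j" "j \<le> n" and len: "length h = j - 1"
  shows "payoff n l P \<gamma> \<rho> B j (h @ y # replicate (n-j) cmax) =
     - l j y + \<gamma> * ((if j \<le> 1 then 0 else h ! (j-2)) / B) * y
     + \<rho> / real n * (sum_list h + y + real (n-j) * cmax)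
     - P * (if (if j = n then y else cmax) < B then 1 else 0)"
proof -
  have a: "(h @ y # replicate (n-j) cmax) ! (j - 1) = y" using len by (simp add: nth_append)
  have b: "prevc (h @ y # replicate (n-j) cmax) j = (if j \<le> 1 then 0 else h ! (j-2))"
  proof (cases "j \<le> 1")
    case False
    then have "j - 2 < length h" using len by simp
    then show ?thesis using False by (simp add: prevc_def nth_append)
  qed (simp add: prevc_def)
  have c0: "(y # replicate (n-j) cmax) ! (n - j) = (if j = n then y else cmax)"
    using j by (cases "n-j") (auto simp: nth_Cons')
  have c: "(h @ y # replicate (n-j) cmax) ! (n - 1) = (if j = n then y else cmax)"
  proof -
    have "n - 1 - length h = n - j" using len j by simp
    moreover have "\<not> n - 1 < length h" using len j by simp
    ultimately show ?thesis using c0 by (simp add: nth_append)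
  qed
  have d: "sum_list (h @ y # replicate (n-j) cmax) = sum_list h + y + real (n-j) * cmax"
    by (simp add: sum_list_replicate)
  show ?thesis unfolding payoff_def a b c d ..
qed

lemma key:
  fixes l ld :: "nat \<Rightarrow> real \<Rightarrow> real"
  assumes j: "1 \<le> j" "j \<le> n" and len: "length h = j - 1" and hs: "set h \<subseteq> {cmin..cmax}"
    and cmin: "0 < cmin" and B: "0 < B" "B < cmax" and g: "\<gamma> > 0" and P: "P > 0"
    and conv: "convex_on {cmin..cmax} (l j)"
    and d: "(l j has_real_derivative ld j cmax) (at cmax within {cmin..cmax})"
    and rho: "ld j cmax < \<rho> / real n"
    and x: "cmin \<le> x" "x < cmax"
  shows "payoff n l P \<gamma> \<rho> B j (h @ x # replicate (n-j) cmax)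
       < payoff n l P \<gamma> \<rho> B j (h @ cmax # replicate (n-j) cmax)"
proof -
  define p where "p = (if j \<le> 1 then 0 else h ! (j-2))"
  define S where "S = sum_list h"
  define K where "K = real (n-j) * cmax"
  have p0: "p \<ge> 0"
  proof (cases "j \<le> 1")
    case False
    then have "h ! (j-2) \<in> set h" using len by simp
    then show ?thesis using hs cmin False unfolding p_def by auto
  qed (simp add: p_def)
  have tan: "l j x - l j cmax \<ge> ld j cmax * (x - cmax)"
    by (rule tangent_end[OF conv d x])
  have gp: "\<gamma> * (p / B) \<ge> 0" using g p0 B by simp
  have A: "\<gamma> * (p / B) * x \<le> \<gamma> * (p / B) * cmax" using gp x by (intro mult_left_mono) auto
  have Bq: "\<rho> / real n * (S + x + K) - \<rho> / real n * (S + cmax + K) = \<rho> / real n * (x - cmax)"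
    by (subst right_diff_distrib[symmetric]) simp
  have Cq: "\<rho> / real n * (x - cmax) < ld j cmax * (x - cmax)"
    using rho x by (intro mult_strict_right_mono_neg) auto
  have pen1: "P * (if (if j = n then cmax else cmax) < B then 1 else 0) = 0" using B by simp
  have pen2: "P * (if (if j = n then x else cmax) < B then 1 else 0) \<ge> 0" using P by simp
  show ?thesis
    unfolding payoff_form[OF j len] p_def[symmetric] S_def[symmetric] K_def[symmetric]
    using tan A Bq Cq pen1 pen2 by linarith
qed

lemma play_Suc_app: "play (Suc m) \<sigma> h = play m \<sigma> (h @ [\<sigma> (Suc (length h)) h])"
  by simp

lemma spne_char:
  fixes l ld :: "nat \<Rightarrow> real \<Rightarrow> real"
  assumes n1: "n \<ge> 1" and cmin: "0 < cmin" "cmin \<le> cmax" and B: "0 < B" "B < cmax"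
    and g: "\<gamma> > 0" and P: "P > 0"
    and conv: "\<forall>i\<in>{1..n}. convex_on {cmin..cmax} (l i)"
    and d: "\<forall>i\<in>{1..n}. (l i has_real_derivative ld i cmax) (at cmax within {cmin..cmax})"
    and rho: "\<forall>i\<in>{1..n}. ld i cmax < \<rho> / real n"
  shows "is_SPNE_outcome n cmin cmax l P \<gamma> \<rho> B c \<longleftrightarrow> c = replicate n cmax"
proof -
  have keyj: "payoff n l P \<gamma> \<rho> B j (h @ x # replicate (n-j) cmax)
       < payoff n l P \<gamma> \<rho> B j (h @ cmax # replicate (n-j) cmax)"
    if "1 \<le> j" "j \<le> n" "length h = j - 1" "set h \<subseteq> {cmin..cmax}" "cmin \<le> x" "x < cmax"
    for j h x
    using that conv d rho by (intro key[OF that(1-4) cmin(1) B g P]) auto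
  define \<sigma>0 where "\<sigma>0 = (\<lambda>(i::nat) (h::real list). cmax)"
  have spne0: "is_SPNE n cmin cmax l P \<gamma> \<rho> B \<sigma>0"
    unfolding is_SPNE_def
  proof (intro conjI allI impI ballI)
    show "feasible_profile n cmin cmax \<sigma>0"
      using cmin by (simp add: feasible_profile_def feasible_strategy_def \<sigma>0_def)
    fix h j \<tau>
    assume h: "length h < n \<and> set h \<subseteq> {cmin..cmax}" and j: "j \<in> {length h + 1..n}"
      and \<tau>: "feasible_strategy cmin cmax \<tau>"
    define h' where "h' = h @ replicate (j - 1 - length h) cmax"
    have lh': "length h' = j - 1" using j by (simp add: h'_def)
    have sh': "set h' \<subseteq> {cmin..cmax}" using h cmin by (auto simp: h'_def)
    have o1: "outcome_from n (\<sigma>0(j := \<tau>)) h = h' @ \<tau> h' # replicate (n - j) cmax"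
      unfolding outcome_from_def \<sigma>0_def h'_def using j h
      by (subst play_const_upd) auto
    have "replicate (n - length h) cmax = replicate (j - 1 - length h) cmax @ replicate (Suc (n - j)) cmax"
      unfolding replicate_add[symmetric] using j by (intro arg_cong2[where f=replicate]) auto
    then have o2: "outcome_from n \<sigma>0 h = h' @ cmax # replicate (n - j) cmax"
      unfolding outcome_from_def \<sigma>0_def h'_def by (simp add: play_const)
    have tr: "\<tau> h' \<in> {cmin..cmax}" using \<tau> by (simp add: feasible_strategy_def)
    show "payoff n l P \<gamma> \<rho> B j (outcome_from n (\<sigma>0(j := \<tau>)) h)
             \<le> payoff n l P \<gamma> \<rho> B j (outcome_from n \<sigma>0 h)"
      unfolding o1 o2
    proof (cases "\<tau> h' = cmax")
      case False
      then show "payoff n l P \<gamma> \<rho> B j (h' @ \<tau> h' # replicate (n - j) cmax)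
             \<le> payoff n l P \<gamma> \<rho> B j (h' @ cmax # replicate (n - j) cmax)"
        using keyj[of j h' "\<tau> h'"] j lh' sh' tr by fastforce
    qed simp
  qed
  have uniq: "outcome_from n \<sigma> [] = replicate n cmax" if S: "is_SPNE n cmin cmax l P \<gamma> \<rho> B \<sigma>" for \<sigma>
  proof -
    have feas: "\<sigma> i h \<in> {cmin..cmax}" if "i \<in> {1..n}" for i h
      using S that unfolding is_SPNE_def feasible_profile_def feasible_strategy_def by blast
    have eq: "\<forall>h. n - length h = e \<and> length h \<le> n \<and> set h \<subseteq> {cmin..cmax} \<longrightarrow>
        outcome_from n \<sigma> h = h @ replicate (n - length h) cmax" for e
    proof (induction e)
      case 0 then show ?case by (simp add: outcome_from_def)
    next
      case (Suc e)
      show ?case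
      proof (intro allI impI)
        fix h assume h: "n - length h = Suc e \<and> length h \<le> n \<and> set h \<subseteq> {cmin..cmax}"
        define k where "k = length h"
        have e_eq: "n - Suc (length h) = e" using h by arith
        define y where "y = \<sigma> (Suc k) h"
        have y: "y \<in> {cmin..cmax}" unfolding y_def using h by (intro feas) (auto simp: k_def)
        have IHy: "outcome_from n \<sigma> (h @ [z]) = h @ z # replicate e cmax"
          if "z \<in> {cmin..cmax}" for z
        proof -
          have "n - length (h @ [z]) = e \<and> length (h @ [z]) \<le> n \<and> set (h @ [z]) \<subseteq> {cmin..cmax}"
            using h that by auto
          then show ?thesis using Suc.IH h by auto
        qed
        have o1: "outcome_from n \<sigma> h = h @ y # replicate e cmax"
        proof -
          have "outcome_from n \<sigma> h = play (Suc e) \<sigma> h" using h e_eq by (simp add: outcome_from_def)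
          also have "\<dots> = play e \<sigma> (h @ [y])" by (simp add: y_def k_def)
          also have "\<dots> = outcome_from n \<sigma> (h @ [y])" using h e_eq by (simp add: outcome_from_def)
          finally show ?thesis using IHy[OF y] by simp
        qed
        define \<tau> where "\<tau> = (\<lambda>(h::real list). cmax)"
        have o2: "outcome_from n (\<sigma>(Suc k := \<tau>)) h = h @ cmax # replicate e cmax"
        proof -
          have "outcome_from n (\<sigma>(Suc k := \<tau>)) h = play (Suc e) (\<sigma>(Suc k := \<tau>)) h"
            using h e_eq by (simp add: outcome_from_def)
          also have "\<dots> = play e (\<sigma>(Suc k := \<tau>)) (h @ [cmax])"
            by (simp add: \<tau>_def k_def)
          also have "\<dots> = play e \<sigma> (h @ [cmax])" by (rule play_upd_late) (simp add: k_def)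
          also have "\<dots> = outcome_from n \<sigma> (h @ [cmax])" using h e_eq by (simp add: outcome_from_def)
          finally show ?thesis using IHy[of cmax] cmin by simp
        qed
        have "payoff n l P \<gamma> \<rho> B (Suc k) (outcome_from n (\<sigma>(Suc k := \<tau>)) h)
             \<le> payoff n l P \<gamma> \<rho> B (Suc k) (outcome_from n \<sigma> h)"
          using S h cmin unfolding is_SPNE_def
          by (auto simp: k_def feasible_strategy_def \<tau>_def)
        then have le: "payoff n l P \<gamma> \<rho> B (Suc k) (h @ cmax # replicate (n - Suc k) cmax)
             \<le> payoff n l P \<gamma> \<rho> B (Suc k) (h @ y # replicate (n - Suc k) cmax)"
          unfolding o1 o2 using h e_eq by (simp add: k_def)
        have "y = cmax"
        proof (rule ccontr)
          assume "y \<noteq> cmax"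
          then have "y < cmax" using y by auto
          have hh: "1 \<le> Suc k" "Suc k \<le> n" "length h = Suc k - 1" "set h \<subseteq> {cmin..cmax}"
            "cmin \<le> y" using h y by (auto simp: k_def)
          from keyj[OF hh \<open>y < cmax\<close>] le show False by linarith
        qed
        then show "outcome_from n \<sigma> h = h @ replicate (n - length h) cmax"
          using o1 h by simp
      qed
    qed
    show ?thesis using eq[of n] by simp
  qed
  show ?thesis
  proof
    assume "is_SPNE_outcome n cmin cmax l P \<gamma> \<rho> B c"
    then show "c = replicate n cmax" using uniq unfolding is_SPNE_outcome_def by auto
  next
    assume "c = replicate n cmax"
    then show "is_SPNE_outcome n cmin cmax l P \<gamma> \<rho> B c"
      unfolding is_SPNE_outcome_def using spne0 uniq by auto
  qed
qed


lemma sum_prev: "(\<Sum>i = 1..n. (if i \<le> 1 then 0 else (c::real))) = real (n - 1) * c"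
proof (induction n)
  case 0 then show ?case by simp
next
  case (Suc n)
  then show ?case by (cases n) (auto simp: algebra_simps)
qed

lemma welfare_form:
  assumes n1: "n \<ge> 1" and B: "0 < B" "B < cmax"
    and out: "spne_outcome n cmin cmax l P \<gamma> \<rho> B = replicate n cmax"
  shows "welfare n cmin cmax l P \<gamma> \<rho> B =
     - (\<Sum>i = 1..n. l i cmax) + \<gamma> * (real (n - 1) * cmax * cmax) / B + \<rho> * (real n * cmax)"
proof -
  have each: "payoff n l P \<gamma> \<rho> B i (replicate n cmax) =
      - l i cmax + (\<gamma> * cmax / B) * (if i \<le> 1 then 0 else cmax) + \<rho> * cmax"
    if i: "i \<in> {1..n}" for i
  proof -
    have a: "replicate n cmax ! (i - 1) = cmax" using i by (intro nth_replicate) auto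
    have b: "prevc (replicate n cmax) i = (if i \<le> 1 then 0 else cmax)" using i by (auto simp: prevc_def)
    have c: "replicate n cmax ! (n - 1) = cmax" using n1 by simp
    have d: "\<rho> / real n * sum_list (replicate n cmax) = \<rho> * cmax"
      using n1 by (simp add: sum_list_replicate)
    show ?thesis unfolding payoff_def a b c d using B by simp
  qed
  have "welfare n cmin cmax l P \<gamma> \<rho> B =
      (\<Sum>i = 1..n. - l i cmax + (\<gamma> * cmax / B) * (if i \<le> 1 then 0 else cmax) + \<rho> * cmax)"
    unfolding welfare_def out using each by (rule sum.cong[OF refl])
  also have "\<dots> = - (\<Sum>i = 1..n. l i cmax) + (\<gamma> * cmax / B) * (real (n - 1) * cmax) + real n * (\<rho> * cmax)"
    by (simp only: sum.distrib sum_distrib_left[symmetric] sum_prev sum_negf sum_constant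
        card_atLeastAtMost) simp
  also have "\<dots> = - (\<Sum>i = 1..n. l i cmax) + \<gamma> * (real (n - 1) * cmax * cmax) / B + \<rho> * (real n * cmax)"
    by (simp add: field_simps)
  finally show ?thesis .
qed


lemma F_deriv:
  fixes C0 K N g0 r0 B0 :: real
  assumes "B0 > 0"
  shows "((\<lambda>x. C0 + fst x * K / snd (snd x) + fst (snd x) * N) has_derivative
     (\<lambda>h. fst h * K / B0 - g0 * K * snd (snd h) / B0^2 + fst (snd h) * N)) (at (g0, r0, B0))"
proof -
  have nz: "snd (snd (g0, r0, B0)) \<noteq> 0" using assms by simp
  show ?thesis
  apply (rule has_derivative_eq_rhs)
   apply (rule derivative_eq_intros refl nz)+
  using assms by (auto simp: field_simps power2_eq_square fun_eq_iff)
qed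

theorem theorem2:
  fixes n :: nat and cmin cmax P :: real
    and l ld :: "nat \<Rightarrow> real \<Rightarrow> real"
    and U :: "(real \<times> real \<times> real) set"
  assumes n2: "n \<ge> 2"
    and cmin_pos: "0 < cmin" and cmin_le: "cmin \<le> cmax"
    and P_pos: "P > 0"
    and strict_conv: "\<forall>i\<in>{1..n}. strictly_convex_on {cmin..cmax} (l i)"
    and deriv: "\<forall>i\<in>{1..n}. \<forall>x\<in>{cmin..cmax}.
                  (l i has_real_derivative ld i x) (at x within {cmin..cmax})"
    and C2: "\<forall>i\<in>{1..n}. \<exists>ldd. continuous_on {cmin..cmax} ldd \<and>
                (\<forall>x\<in>{cmin..cmax}. (ld i has_real_derivative ldd x) (at x within {cmin..cmax}))"
    and deriv_pos: "\<forall>i\<in>{1..n}. \<forall>x\<in>{cmin..cmax}. ld i x > 0"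
    and U_open: "open U"
    and U_cond: "\<forall>\<gamma> \<rho> B. (\<gamma>, \<rho>, B) \<in> U \<longrightarrow>
        \<gamma> > 0 \<and> \<rho> > 0 \<and> 0 < B \<and> B < cmax \<and>
        \<rho> > real n * Max ((\<lambda>i. ld i cmax) ` {1..n}) \<and>
        \<gamma> > Max ((\<lambda>k. (ld k cmax * B - \<rho> / real n) / (cmin / B)) ` {2..n}) \<and>
        P > (Max ((\<lambda>i. ld i cmax) ` {1..n}) + \<gamma> * (cmax / B) + \<rho> / real n) * (cmax - cmin)"
  shows "(\<forall>\<gamma> \<rho> B. (\<gamma>, \<rho>, B) \<in> U \<longrightarrow>
            (\<exists>!c. is_SPNE_outcome n cmin cmax l P \<gamma> \<rho> B c)) \<and>
         (\<forall>x\<in>U. \<exists>D. ((\<lambda>(\<gamma>, \<rho>, B). welfare n cmin cmax l P \<gamma> \<rho> B) has_derivative D) (at x) \<and>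
            D (1, 0, 0) > 0 \<and> D (0, 1, 0) > 0 \<and> D (0, 0, 1) < 0)"
proof -
  have n1: "n \<ge> 1" using n2 by simp
  have cm: "cmax \<in> {cmin..cmax}" using cmin_le by simp
  have conv: "\<forall>i\<in>{1..n}. convex_on {cmin..cmax} (l i)"
    using strict_conv sc_convex by blast
  have dcm: "\<forall>i\<in>{1..n}. (l i has_real_derivative ld i cmax) (at cmax within {cmin..cmax})"
    using deriv cm by blast
  have char: "is_SPNE_outcome n cmin cmax l P \<gamma> \<rho> B c \<longleftrightarrow> c = replicate n cmax"
    and Bpos: "0 < B" "B < cmax" and gpos: "\<gamma> > 0"
    if U: "(\<gamma>, \<rho>, B) \<in> U" for \<gamma> \<rho> B c
  proof -
    from U_cond U have c: "\<gamma> > 0" "\<rho> > 0" "0 < B" "B < cmax"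
      "\<rho> > real n * Max ((\<lambda>i. ld i cmax) ` {1..n})" by blast+
    have rho: "\<forall>i\<in>{1..n}. ld i cmax < \<rho> / real n"
    proof
      fix i assume i: "i \<in> {1..n}"
      have "ld i cmax \<le> Max ((\<lambda>i. ld i cmax) ` {1..n})" using i by (intro Max_ge) auto
      then have "real n * ld i cmax \<le> real n * Max ((\<lambda>i. ld i cmax) ` {1..n})"
        by (intro mult_left_mono) auto
      then have "real n * ld i cmax < \<rho>" using c(5) by linarith
      then show "ld i cmax < \<rho> / real n" using n1 by (simp add: field_simps)
    qed
    show "is_SPNE_outcome n cmin cmax l P \<gamma> \<rho> B c \<longleftrightarrow> c = replicate n cmax"
      by (rule spne_char[where ld=ld and l=l, OF n1 cmin_pos cmin_le c(3) c(4) c(1) P_pos conv dcm rho])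
    show "0 < B" "B < cmax" "\<gamma> > 0" using c by auto
  qed
  define C0 where "C0 = - (\<Sum>i = 1..n. l i cmax)"
  define K where "K = real (n - 1) * cmax * cmax"
  define N where "N = real n * cmax"
  define F where "F = (\<lambda>x::real \<times> real \<times> real. C0 + fst x * K / snd (snd x) + fst (snd x) * N)"
  have WF: "(\<lambda>(\<gamma>, \<rho>, B). welfare n cmin cmax l P \<gamma> \<rho> B) y = F y" if y: "y \<in> U" for y
  proof -
    obtain g r b where yy: "y = (g, r, b)" by (cases y) auto
    have U: "(g, r, b) \<in> U" using y yy by simp
    have "spne_outcome n cmin cmax l P g r b = replicate n cmax"
      unfolding spne_outcome_def char[OF U] by simp
    then show ?thesis unfolding yy F_def C0_def K_def N_def
      using welfare_form[OF n1 Bpos[OF U]] by simp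
  qed
  have cpos: "cmax > 0" using cmin_pos cmin_le by simp
  have Kpos: "K > 0" unfolding K_def using n2 cpos by simp
  have Npos: "N > 0" unfolding N_def using n2 cpos by simp
  show ?thesis
  proof (intro conjI allI impI ballI)
    fix \<gamma> \<rho> B assume "(\<gamma>, \<rho>, B) \<in> U"
    then show "\<exists>!c. is_SPNE_outcome n cmin cmax l P \<gamma> \<rho> B c" using char by auto
  next
    fix x assume x: "x \<in> U"
    obtain g0 r0 B0 where xx: "x = (g0, r0, B0)" by (cases x) auto
    have U: "(g0, r0, B0) \<in> U" using x xx by simp
    note bp = Bpos[OF U] and gp = gpos[OF U]
    define D where "D = (\<lambda>h::real \<times> real \<times> real. fst h * K / B0 - g0 * K * snd (snd h) / B0^2 + fst (snd h) * N)"
    have "(F has_derivative D) (at x)"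
      unfolding F_def D_def xx by (rule F_deriv) (use bp in simp)
    then have "((\<lambda>(\<gamma>, \<rho>, B). welfare n cmin cmax l P \<gamma> \<rho> B) has_derivative D) (at x)"
      by (rule has_derivative_transform_within_open[OF _ U_open x]) (simp add: WF)
    moreover have "D (1, 0, 0) > 0" "D (0, 1, 0) > 0" "D (0, 0, 1) < 0"
      unfolding D_def using Kpos Npos bp gp by (auto simp: field_simps)
    ultimately show "\<exists>D. ((\<lambda>(\<gamma>, \<rho>, B). welfare n cmin cmax l P \<gamma> \<rho> B) has_derivative D) (at x) \<and>
            D (1, 0, 0) > 0 \<and> D (0, 1, 0) > 0 \<and> D (0, 0, 1) < 0" by blast
  qed
qed

end
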